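(* In the setting of the flag $\mathcal{F}=(\mathcal{F}_1,\dots,\mathcal{F}_r)$, $r\ge 2$, with $\mathcal{F}_i=\bigoplus_{j=0}^{s_i-1}\mathbb{F}_{q^m}\alpha^{lj}$ and $1\le s_1<\dots<s_r\le L$, assume $L<s=n/m$. Then every subspace of $\mathcal{F}$ is a subfield of $\mathbb{F}_{q^n}$ (i.e. $\mathcal{F}$ is a Galois flag and $\mathrm{Orb}(\mathcal{F})$ is a Galois flag code) if and only if the type of $\mathcal{F}$ is $(m,mL)$, i.e. $r=2$, $s_1=1$, $s_2=L$.
   Context: $q$ prime power; $m$ divides $n$; $\alpha$ is a primitive element of $\mathbb{F}_{q^n}$; $l$ is an integer with $1\le l<\frac{q^n-1}{q^m-1}$; $L$ is the degree of the minimal polynomial of $\alpha^l$ over $\mathbb{F}_{q^m}$ (so $L\mid n/m$). Subspaces are $\mathbb{F}_q$-subspaces of $\mathbb{F}_{q^n}$; a flag is a chain $\{0\}\subsetneq\mathcal{F}_1\subsetneq\cdots\subsetneq\mathcal{F}_r\subsetneq\mathbb{F}_{q^n}$, its type being the vector of dimensions (here $(ms_1,\dots,ms_r)$). A Galois flag is a flag all of whose subspaces are subfields of $\mathbb{F}_{q^n}$, and a Galois flag code is the orbit $\mathrm{Orb}_\beta$ of a Galois flag under multiplication by powers of some $\beta\in\mathbb{F}_{q^n}^\ast$. *)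

theory Defs
  imports "HOL-Computational_Algebra.Primes"
begin

definition is_subfield :: "'a::field set \<Rightarrow> bool" where
  "is_subfield S \<longleftrightarrow> 0 \<in> S \<and> 1 \<in> S \<and>
     (\<forall>x\<in>S. \<forall>y\<in>S. x + y \<in> S \<and> x * y \<in> S) \<and>
     (\<forall>x\<in>S. - x \<in> S) \<and> (\<forall>x\<in>S. x \<noteq> 0 \<longrightarrow> inverse x \<in> S)"

definition primitive_element :: "'a::field \<Rightarrow> bool" where
  "primitive_element a \<longleftrightarrow> a \<noteq> 0 \<and> (\<forall>x. x \<noteq> 0 \<longrightarrow> (\<exists>k::nat. a ^ k = x))"

definition minpoly_degree :: "'a::field set \<Rightarrow> 'a \<Rightarrow> nat" where
  "minpoly_degree K b = (LEAST k. k \<ge> 1 \<and> (\<exists>c::nat \<Rightarrow> 'a. (\<forall>i<k. c i \<in> K) \<and>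
        b ^ k + (\<Sum>i<k. c i * b ^ i) = 0))"

definition power_span :: "'a::field set \<Rightarrow> 'a \<Rightarrow> nat \<Rightarrow> 'a set" where
  "power_span K b s = {x. \<exists>c::nat \<Rightarrow> 'a. (\<forall>j<s. c j \<in> K) \<and> x = (\<Sum>j<s. c j * b ^ j)}"

end

theory Submission
  imports Defs
begin

lemma pow_repeat:
  fixes x :: "'a::{monoid_mult,finite}"
  shows "\<exists>i j. i < j \<and> x ^ i = x ^ j"
proof -
  have "\<not> inj (\<lambda>i::nat. x ^ i)"
  proof
    assume "inj (\<lambda>i::nat. x ^ i)"
    moreover have "finite (range (\<lambda>i::nat. x ^ i))" by simp
    ultimately have "finite (UNIV :: nat set)" using finite_imageD by blast
    then show False by simp
  qed
  then obtain i j where "i \<noteq> j" "x ^ i = x ^ j" by (auto simp: inj_def)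
  then show ?thesis by (metis linorder_neqE_nat)
qed

lemma sf0: "is_subfield K \<Longrightarrow> 0 \<in> K" unfolding is_subfield_def by blast
lemma sf1: "is_subfield K \<Longrightarrow> 1 \<in> K" unfolding is_subfield_def by blast
lemma sfadd: "is_subfield K \<Longrightarrow> x \<in> K \<Longrightarrow> y \<in> K \<Longrightarrow> x + y \<in> K" unfolding is_subfield_def by blast
lemma sfmul: "is_subfield K \<Longrightarrow> x \<in> K \<Longrightarrow> y \<in> K \<Longrightarrow> x * y \<in> K" unfolding is_subfield_def by blast
lemma sfneg: "is_subfield K \<Longrightarrow> x \<in> K \<Longrightarrow> - x \<in> K" unfolding is_subfield_def by blast
lemma sfm1: "is_subfield K \<Longrightarrow> - 1 \<in> K" using sfneg sf1 by blast

lemma ps_intro: "x = (\<Sum>j<s. c j * b ^ j) \<Longrightarrow> \<forall>j<s. c j \<in> K \<Longrightarrow> x \<in> power_span K b s"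
  unfolding power_span_def by blast

lemma ps_add:
  assumes K: "is_subfield K" and "x \<in> power_span K b s" "y \<in> power_span K b s"
  shows "x + y \<in> power_span K b s"
proof -
  obtain c where c: "\<forall>j<s. c j \<in> K" "x = (\<Sum>j<s. c j * b ^ j)" using assms(2) by (auto simp: power_span_def)
  obtain d where d: "\<forall>j<s. d j \<in> K" "y = (\<Sum>j<s. d j * b ^ j)" using assms(3) by (auto simp: power_span_def)
  have "x + y = (\<Sum>j<s. (c j + d j) * b ^ j)" using c d by (simp add: sum.distrib distrib_right)
  moreover have "\<forall>j<s. c j + d j \<in> K" using c d sfadd[OF K] by blast
  ultimately show ?thesis by (rule ps_intro)
qed

lemma ps_smult:
  assumes K: "is_subfield K" and "a \<in> K" "x \<in> power_span K b s"
  shows "a * x \<in> power_span K b s"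
proof -
  obtain c where c: "\<forall>j<s. c j \<in> K" "x = (\<Sum>j<s. c j * b ^ j)" using assms(3) by (auto simp: power_span_def)
  have "a * x = (\<Sum>j<s. (a * c j) * b ^ j)" using c by (simp add: sum_distrib_left mult.assoc)
  moreover have "\<forall>j<s. a * c j \<in> K" using c sfmul[OF K] assms(2) by blast
  ultimately show ?thesis by (rule ps_intro)
qed

lemma ps_neg:
  assumes K: "is_subfield K" and "x \<in> power_span K b s"
  shows "- x \<in> power_span K b s"
proof -
  have "-1 \<in> K" using sfm1[OF K] .
  from ps_smult[OF K this assms(2)] show ?thesis by simp
qed

lemma ps_zero:
  assumes K: "is_subfield K"
  shows "0 \<in> power_span K b s"
proof -
  have "0 = (\<Sum>j<s. (\<lambda>_. 0) j * b ^ j)" by simp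
  moreover have "\<forall>j<s. (\<lambda>_. 0) j \<in> K" using sf0[OF K] by simp
  ultimately show ?thesis by (rule ps_intro)
qed

lemma ps_sum:
  assumes K: "is_subfield K" and "finite A" and "\<forall>a\<in>A. f a \<in> power_span K b s"
  shows "sum f A \<in> power_span K b s"
  using assms(2,3)
proof (induction A rule: finite_induct)
  case empty then show ?case using ps_zero[OF K] by simp
next
  case (insert a A) then show ?case using ps_add[OF K] by simp
qed

lemma ps_mono:
  assumes K: "is_subfield K" and "j < s"
  shows "b ^ j \<in> power_span K b s"
proof -
  have "b ^ j = (\<Sum>i<s. (\<lambda>i. if i = j then 1 else 0) i * b ^ i)"
  proof -
    have "(\<Sum>i<s. (\<lambda>i. if i = j then 1 else 0) i * b ^ i) = (\<Sum>i<s. if i = j then b^i else 0)"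
      by (rule sum.cong) auto
    then show ?thesis using assms(2) by simp
  qed
  moreover have "\<forall>i<s. (\<lambda>i. if i = j then 1 else 0) i \<in> K" using sf0[OF K] sf1[OF K] by simp
  ultimately show ?thesis by (rule ps_intro)
qed

definition good :: "'a::field set \<Rightarrow> 'a \<Rightarrow> nat \<Rightarrow> bool" where
  "good K b k \<longleftrightarrow> k \<ge> 1 \<and> (\<exists>c::nat \<Rightarrow> 'a. (\<forall>i<k. c i \<in> K) \<and> b ^ k + (\<Sum>i<k. c i * b ^ i) = 0)"

lemma good_intro: "1 \<le> k \<Longrightarrow> b ^ k + (\<Sum>i<k. c i * b ^ i) = 0 \<Longrightarrow> \<forall>i<k. c i \<in> K \<Longrightarrow> good K b k"
  unfolding good_def by blast

lemma good_exists:
  fixes b :: "'a::{field,finite}"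
  assumes K: "is_subfield K"
  shows "\<exists>k. good K b k"
proof -
  obtain i j where ij: "i < j" "b ^ i = b ^ j" using pow_repeat by blast
  have "b ^ j + (\<Sum>t<j. (\<lambda>t. if t = i then -1 else 0) t * b ^ t) = 0"
  proof -
    have "(\<Sum>t<j. (\<lambda>t. if t = i then -1 else 0) t * b ^ t) = (\<Sum>t<j. if t = i then - (b^t) else 0)"
      by (rule sum.cong) auto
    then show ?thesis using ij by simp
  qed
  moreover have "\<forall>t<j. (\<lambda>t. if t = i then -1 else 0) t \<in> K" using sf0[OF K] sfm1[OF K] by simp
  ultimately have "good K b j" using ij(1) by (intro good_intro) auto
  then show ?thesis by blast
qed

lemma minpoly_good:
  fixes b :: "'a::{field,finite}"
  assumes K: "is_subfield K"
  shows "good K b (minpoly_degree K b)"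
proof -
  have "minpoly_degree K b = (LEAST k. good K b k)" unfolding minpoly_degree_def good_def by simp
  then show ?thesis using LeastI_ex[OF good_exists[OF K]] by simp
qed

lemma minpoly_le:
  assumes "good K b k"
  shows "minpoly_degree K b \<le> k"
proof -
  have "minpoly_degree K b = (LEAST k. good K b k)" unfolding minpoly_degree_def good_def by simp
  then show ?thesis using Least_le[of "good K b", OF assms] by simp
qed

lemma full_subfield:
  fixes b :: "'a::{field,finite}"
  assumes K: "is_subfield K" and L: "L = minpoly_degree K b"
  shows "is_subfield (power_span K b L)"
proof -
  let ?S = "power_span K b L"
  from minpoly_good[OF K, of b] L obtain d where L1: "L \<ge> 1" and d: "\<forall>i<L. d i \<in> K"
    "b ^ L + (\<Sum>i<L. d i * b ^ i) = 0" by (auto simp: good_def)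
  have bL: "b ^ L \<in> ?S"
  proof -
    have "b ^ L = - (\<Sum>i<L. d i * b ^ i)" using d(2) by (simp add: eq_neg_iff_add_eq_0)
    moreover have "(\<Sum>i<L. d i * b ^ i) \<in> ?S"
      by (rule ps_sum[OF K]) (use d(1) ps_smult[OF K] ps_mono[OF K] in auto)
    ultimately show ?thesis using ps_neg[OF K] by simp
  qed
  have pw: "b ^ j \<in> ?S" if "j \<le> L" for j
    using that ps_mono[OF K] bL by (cases "j = L") auto
  have bm: "b * x \<in> ?S" if xS: "x \<in> ?S" for x
  proof -
    obtain c where c: "\<forall>j<L. c j \<in> K" "x = (\<Sum>j<L. c j * b ^ j)" using xS by (auto simp: power_span_def)
    have eq: "b * x = (\<Sum>j<L. c j * b ^ Suc j)" using c by (simp add: sum_distrib_left algebra_simps)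
    have all: "\<forall>j\<in>{..<L}. c j * b ^ Suc j \<in> ?S"
    proof
      fix j assume "j \<in> {..<L}"
      then have "b ^ Suc j \<in> ?S" "c j \<in> K" using pw[of "Suc j"] c(1) by (auto simp del: power_Suc)
      then show "c j * b ^ Suc j \<in> ?S" using ps_smult[OF K] by blast
    qed
    show ?thesis unfolding eq by (rule ps_sum[OF K finite_lessThan all])
  qed
  have xp: "x * b ^ j \<in> ?S" if "x \<in> ?S" for x j
    using that by (induction j) (auto simp: bm mult.left_commute)
  have mul: "x * y \<in> ?S" if xyS: "x \<in> ?S" "y \<in> ?S" for x y
  proof -
    obtain c where c: "\<forall>j<L. c j \<in> K" "y = (\<Sum>j<L. c j * b ^ j)" using xyS(2) by (auto simp: power_span_def)
    have eq: "x * y = (\<Sum>j<L. c j * (x * b ^ j))" using c by (simp add: sum_distrib_left algebra_simps)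
    have all: "\<forall>j\<in>{..<L}. c j * (x * b ^ j) \<in> ?S"
    proof
      fix j assume "j \<in> {..<L}"
      then have "x * b ^ j \<in> ?S" "c j \<in> K" using xp[OF xyS(1)] c(1) by auto
      then show "c j * (x * b ^ j) \<in> ?S" using ps_smult[OF K] by blast
    qed
    show ?thesis unfolding eq by (rule ps_sum[OF K finite_lessThan all])
  qed
  have one: "1 \<in> ?S" using pw[of 0] by simp
  have xpow: "x ^ i \<in> ?S" if "x \<in> ?S" for x i
    using that by (induction i) (auto simp: one mul)
  have inv: "inverse x \<in> ?S" if xS: "x \<in> ?S" "x \<noteq> 0" for x
  proof -
    obtain i j where ij: "i < j" "x ^ i = x ^ j" using pow_repeat by blast
    have "x ^ j = x ^ i * x ^ (j - i)" using ij(1) by (simp add: power_add[symmetric])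
    then have "x ^ i * x ^ (j - i) = x ^ i * 1" using ij by simp
    then have e: "x ^ (j - i) = 1" using xS(2) by simp
    have "x * x ^ (j - i - 1) = x ^ (j - i)" using ij(1)
      by (metis Suc_diff_Suc diff_Suc_1 diff_diff_left power_Suc zero_less_diff Suc_pred)
    then have "inverse x = x ^ (j - i - 1)" using e by (simp add: inverse_unique)
    then show ?thesis using xpow[OF xS(1)] by simp
  qed
  show ?thesis unfolding is_subfield_def
    by (intro conjI ballI impI) (simp_all add: ps_zero[OF K] one ps_add[OF K] mul ps_neg[OF K] inv)
qed

lemma span_one:
  assumes "is_subfield K"
  shows "is_subfield (power_span K b 1)"
proof -
  have "power_span K b 1 = K" unfolding power_span_def by auto
  then show ?thesis using assms by simp
qed

lemma mid_not_subfield: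
  fixes b :: "'a::{field,finite}"
  assumes K: "is_subfield K" and L: "L = minpoly_degree K b" and s: "2 \<le> s" "s < L"
  shows "\<not> is_subfield (power_span K b s)"
proof
  let ?S = "power_span K b s"
  assume S: "is_subfield ?S"
  have b: "b \<in> ?S" using ps_mono[OF K, of 1 s b] s by simp
  have "b ^ j \<in> ?S" for j
  proof (induction j)
    case 0 show ?case using sf1[OF S] by simp
  next
    case (Suc j) show ?case using sfmul[OF S b Suc] by simp
  qed
  then obtain c where c: "\<forall>j<s. c j \<in> K" "b ^ s = (\<Sum>j<s. c j * b ^ j)" by (auto simp: power_span_def)
  have "b ^ s + (\<Sum>j<s. (- c j) * b ^ j) = 0" using c(2) by (simp add: sum_negf)
  moreover have "\<forall>j<s. - c j \<in> K" using c(1) sfneg[OF K] by blast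
  ultimately have "good K b s" using s by (intro good_intro) auto
  then have "L \<le> s" using minpoly_le L by simp
  then show False using s by simp
qed

lemma strict_mono_range:
  assumes "\<And>i. 1 \<le> i \<Longrightarrow> i < r \<Longrightarrow> s i < s (Suc i)" "1 \<le> i" "i < j" "j \<le> r"
  shows "(s i :: nat) < s j"
  using assms(3,4)
proof (induction j)
  case 0 then show ?case by simp
next
  case (Suc j)
  show ?case
  proof (cases "i = j")
    case True then show ?thesis using assms(1,2) Suc.prems by simp
  next
    case False
    then have "s i < s j" using Suc by simp
    also have "s j < s (Suc j)" using assms(1) assms(2) Suc.prems False by simp
    finally show ?thesis .
  qed
qed

theorem mainTheorem6:
  fixes \<alpha> :: "'a::{field,finite}"
    and Fqm :: "'a set"
    and p k q n m l r L :: nat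
    and s :: "nat \<Rightarrow> nat"
  assumes "prime p" and "k \<ge> 1" and "q = p ^ k"
    and "m \<ge> 1" and "m dvd n"
    and "card (UNIV :: 'a set) = q ^ n"
    and "is_subfield Fqm" and "card Fqm = q ^ m"
    and "primitive_element \<alpha>"
    and "1 \<le> l" and "l < (q ^ n - 1) div (q ^ m - 1)"
    and "L = minpoly_degree Fqm (\<alpha> ^ l)"
    and "r \<ge> 2"
    and "1 \<le> s 1"
    and "\<And>i. 1 \<le> i \<Longrightarrow> i < r \<Longrightarrow> s i < s (Suc i)"
    and "s r \<le> L"
    and "L < n div m"
  shows "(\<forall>i\<in>{1..r}. is_subfield (power_span Fqm (\<alpha> ^ l) (s i)))
           \<longleftrightarrow> (r = 2 \<and> s 1 = 1 \<and> s 2 = L)"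
proof
  assume A: "\<forall>i\<in>{1..r}. is_subfield (power_span Fqm (\<alpha> ^ l) (s i))"
  have mono: "s i < s j" if "1 \<le> i" "i < j" "j \<le> r" for i j
    using strict_mono_range[of r s i j] assms(15) that by blast
  have bounds: "1 \<le> s i \<and> s i \<le> L" if "1 \<le> i" "i \<le> r" for i
  proof -
    have "s 1 \<le> s i" using mono[of 1 i] that by (cases "i = 1") auto
    moreover have "s i \<le> s r" using mono[of i r] that by (cases "i = r") auto
    ultimately show ?thesis using assms(14,16) by simp
  qed
  have cases: "s i = 1 \<or> s i = L" if "1 \<le> i" "i \<le> r" for i
  proof (rule ccontr)
    assume "\<not> (s i = 1 \<or> s i = L)"
    then have "2 \<le> s i" "s i < L" using bounds[OF that] by auto
    moreover have "i \<in> {1..r}" using that by simp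
    ultimately show False using mid_not_subfield[OF assms(7) assms(12)] A by blast
  qed
  have s12: "s 1 < s 2" using mono[of 1 2] assms(13) by simp
  have "s 1 = 1" "s 2 = L" using cases[of 1] cases[of 2] bounds[of 2] s12 assms(13) by auto
  moreover have "r = 2"
  proof (rule ccontr)
    assume "r \<noteq> 2"
    then have "3 \<le> r" using assms(13) by simp
    then have "s 2 < s 3" using mono[of 2 3] by simp
    then show False using bounds[of 3] \<open>3 \<le> r\<close> \<open>s 2 = L\<close> by simp
  qed
  ultimately show "r = 2 \<and> s 1 = 1 \<and> s 2 = L" by simp
next
  assume "r = 2 \<and> s 1 = 1 \<and> s 2 = L"
  then show "\<forall>i\<in>{1..r}. is_subfield (power_span Fqm (\<alpha> ^ l) (s i))"
    using span_one[OF assms(7)] full_subfield[OF assms(7) assms(12)]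
    by (auto simp: le_Suc_eq numeral_2_eq_2 intro: ccontr)
qed

end
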